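(* Let $G$ be a countable group acting weakly mixingly (and preserving the probability measure) on a standard probability space $(X,\mu)$, with action written $x \mapsto g\cdot x$. Let $\mathcal{G}$ be a Polish group admitting a bi-invariant complete metric $d$, and let $K \subset \mathcal{G}$ be a closed subgroup. Suppose that $\gamma : G \times X \rightarrow K$ is a $1$-cocycle, that $v : X \rightarrow \mathcal{G}$ is a measurable map and that $\theta : G \rightarrow \mathcal{G}$ is a group homomorphism such that $$\gamma(g,x) = v(g \cdot x)\, \theta(g)\, v(x)^{-1}$$ for almost every $x \in X$ and every $g\in G$. Then, whenever $v_0 \in \mathcal{G}$ is an essential value of the function $v$, we have $v(x)v_0^{-1} \in K$ for almost every $x \in X$ and $v_0\theta(g)v_0^{-1} \in K$ for all $g \in G$. *)

theory Defs
  imports "HOL-Probability.Probability" "HOL-Algebra.Group"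
begin

definition mp_action :: "('g, 'b) monoid_scheme \<Rightarrow> 'x measure \<Rightarrow> ('g \<Rightarrow> 'x \<Rightarrow> 'x) \<Rightarrow> bool" where
  "mp_action G M act \<longleftrightarrow>
     (\<forall>x\<in>space M. act \<one>\<^bsub>G\<^esub> x = x) \<and>
     (\<forall>g\<in>carrier G. \<forall>h\<in>carrier G. \<forall>x\<in>space M. act (g \<otimes>\<^bsub>G\<^esub> h) x = act g (act h x)) \<and>
     (\<forall>g\<in>carrier G. act g \<in> measurable M M \<and> distr M M (act g) = M)"

definition ergodic_action :: "('g, 'b) monoid_scheme \<Rightarrow> 'x measure \<Rightarrow> ('g \<Rightarrow> 'x \<Rightarrow> 'x) \<Rightarrow> bool" where
  "ergodic_action G M act \<longleftrightarrow>
     (\<forall>A\<in>sets M. (\<forall>g\<in>carrier G. act g -` A \<inter> space M = A) \<longrightarrow>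
        emeasure M A = 0 \<or> emeasure M A = emeasure M (space M))"

definition weakly_mixing_action :: "('g, 'b) monoid_scheme \<Rightarrow> 'x measure \<Rightarrow> ('g \<Rightarrow> 'x \<Rightarrow> 'x) \<Rightarrow> bool" where
  "weakly_mixing_action G M act \<longleftrightarrow>
     mp_action G M act \<and>
     ergodic_action G (M \<Otimes>\<^sub>M M) (\<lambda>g z. (act g (fst z), act g (snd z)))"

definition is_cocycle :: "('g, 'b) monoid_scheme \<Rightarrow> ('h::topological_space, 'c) monoid_scheme \<Rightarrow> 'h set \<Rightarrow> 'x measure
     \<Rightarrow> ('g \<Rightarrow> 'x \<Rightarrow> 'x) \<Rightarrow> ('g \<Rightarrow> 'x \<Rightarrow> 'h) \<Rightarrow> bool" where
  "is_cocycle G H K M act \<gamma> \<longleftrightarrow>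
     (\<forall>g\<in>carrier G. \<gamma> g \<in> borel_measurable M \<and> (\<forall>x\<in>space M. \<gamma> g x \<in> K)) \<and>
     (\<forall>g\<in>carrier G. \<forall>h\<in>carrier G.
        AE x in M. \<gamma> (g \<otimes>\<^bsub>G\<^esub> h) x = \<gamma> g (act h x) \<otimes>\<^bsub>H\<^esub> \<gamma> h x)"

definition bi_invariant_metric :: "('h::metric_space, 'c) monoid_scheme \<Rightarrow> bool" where
  "bi_invariant_metric H \<longleftrightarrow>
     (\<forall>a x y. dist (a \<otimes>\<^bsub>H\<^esub> x) (a \<otimes>\<^bsub>H\<^esub> y) = dist x y \<and>
              dist (x \<otimes>\<^bsub>H\<^esub> a) (y \<otimes>\<^bsub>H\<^esub> a) = dist x y)"

definition essential_value :: "'x measure \<Rightarrow> ('x \<Rightarrow> 'h::topological_space) \<Rightarrow> 'h \<Rightarrow> bool" where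
  "essential_value M v v0 \<longleftrightarrow>
     (\<forall>U. open U \<and> v0 \<in> U \<longrightarrow> emeasure M (v -` U \<inter> space M) > 0)"

end

theory Submission
  imports Defs
begin

lemma biinv_inv_dist:
  assumes "group H" "carrier H = UNIV" "bi_invariant_metric H"
  shows "dist (inv\<^bsub>H\<^esub> x) (inv\<^bsub>H\<^esub> y) = dist x (y::'h::metric_space)"
proof -
  interpret H: group H by fact
  have b: "\<And>a x y. dist (a \<otimes>\<^bsub>H\<^esub> x) (a \<otimes>\<^bsub>H\<^esub> y) = dist x y"
          "\<And>a x y. dist (x \<otimes>\<^bsub>H\<^esub> a) (y \<otimes>\<^bsub>H\<^esub> a) = dist x y"
    using assms(3) unfolding bi_invariant_metric_def by auto
  have "dist (inv\<^bsub>H\<^esub> x) (inv\<^bsub>H\<^esub> y) = dist (x \<otimes>\<^bsub>H\<^esub> inv\<^bsub>H\<^esub> x) (x \<otimes>\<^bsub>H\<^esub> inv\<^bsub>H\<^esub> y)"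
    using b(1) by metis
  also have "\<dots> = dist \<one>\<^bsub>H\<^esub> (x \<otimes>\<^bsub>H\<^esub> inv\<^bsub>H\<^esub> y)"
    using assms(2) by simp
  also have "\<dots> = dist (\<one>\<^bsub>H\<^esub> \<otimes>\<^bsub>H\<^esub> y) (x \<otimes>\<^bsub>H\<^esub> inv\<^bsub>H\<^esub> y \<otimes>\<^bsub>H\<^esub> y)"
    by (simp only: b(2))
  also have "\<dots> = dist y x" using assms(2) by (simp add: H.m_assoc)
  finally show ?thesis by (simp add: dist_commute)
qed

lemma biinv_mult_dist:
  assumes "group H" "carrier H = UNIV" "bi_invariant_metric H"
  shows "dist (x \<otimes>\<^bsub>H\<^esub> y) (x' \<otimes>\<^bsub>H\<^esub> y') \<le> dist x x' + dist y (y'::'h::metric_space)"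
proof -
  have b: "\<And>a x y. dist (a \<otimes>\<^bsub>H\<^esub> x) (a \<otimes>\<^bsub>H\<^esub> y) = dist x y"
          "\<And>a x y. dist (x \<otimes>\<^bsub>H\<^esub> a) (y \<otimes>\<^bsub>H\<^esub> a) = dist x y"
    using assms(3) unfolding bi_invariant_metric_def by auto
  have "dist (x \<otimes>\<^bsub>H\<^esub> y) (x' \<otimes>\<^bsub>H\<^esub> y') \<le> dist (x \<otimes>\<^bsub>H\<^esub> y) (x' \<otimes>\<^bsub>H\<^esub> y) + dist (x' \<otimes>\<^bsub>H\<^esub> y) (x' \<otimes>\<^bsub>H\<^esub> y')"
    by (rule dist_triangle)
  then show ?thesis using b by simp
qed

lemma biinv_cont:
  assumes "group H" "carrier H = UNIV" "bi_invariant_metric H"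
  shows "continuous_on UNIV (\<lambda>p::'h::metric_space \<times> 'h. fst p \<otimes>\<^bsub>H\<^esub> inv\<^bsub>H\<^esub> (snd p))"
proof (rule uniformly_continuous_imp_continuous, unfold uniformly_continuous_on_def, intro allI impI)
  fix e :: real assume "e > 0"
  show "\<exists>d>0. \<forall>x\<in>UNIV. \<forall>x'\<in>UNIV. dist x' x < d \<longrightarrow>
          dist (fst x' \<otimes>\<^bsub>H\<^esub> inv\<^bsub>H\<^esub> snd x') (fst x \<otimes>\<^bsub>H\<^esub> inv\<^bsub>H\<^esub> snd x) < e"
  proof (intro exI[of _ "e/2"] conjI ballI impI)
    fix p q :: "'h \<times> 'h" assume "dist q p < e/2"
    have "dist (fst q \<otimes>\<^bsub>H\<^esub> inv\<^bsub>H\<^esub> snd q) (fst p \<otimes>\<^bsub>H\<^esub> inv\<^bsub>H\<^esub> snd p)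
       \<le> dist (fst q) (fst p) + dist (snd q) (snd p)"
      using biinv_mult_dist[OF assms] biinv_inv_dist[OF assms] by metis
    also have "\<dots> \<le> dist q p + dist q p" by (intro add_mono dist_fst_le dist_snd_le)
    finally show "dist (fst q \<otimes>\<^bsub>H\<^esub> inv\<^bsub>H\<^esub> snd q) (fst p \<otimes>\<^bsub>H\<^esub> inv\<^bsub>H\<^esub> snd p) < e"
      using \<open>dist q p < e/2\<close> by linarith
  qed (use \<open>e>0\<close> in auto)
qed

lemma alg1:
  assumes "group H" "carrier H = UNIV"
    and "c = w \<otimes>\<^bsub>H\<^esub> t \<otimes>\<^bsub>H\<^esub> inv\<^bsub>H\<^esub> a"
    and "d = w' \<otimes>\<^bsub>H\<^esub> t \<otimes>\<^bsub>H\<^esub> inv\<^bsub>H\<^esub> b"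
  shows "a \<otimes>\<^bsub>H\<^esub> inv\<^bsub>H\<^esub> b = inv\<^bsub>H\<^esub> c \<otimes>\<^bsub>H\<^esub> (w \<otimes>\<^bsub>H\<^esub> inv\<^bsub>H\<^esub> w') \<otimes>\<^bsub>H\<^esub> d"
proof -
  interpret H: group H by fact
  have c1: "\<And>x y. inv\<^bsub>H\<^esub> x \<otimes>\<^bsub>H\<^esub> (x \<otimes>\<^bsub>H\<^esub> y) = y"
   and c2: "\<And>x y. x \<otimes>\<^bsub>H\<^esub> (inv\<^bsub>H\<^esub> x \<otimes>\<^bsub>H\<^esub> y) = y"
    using assms(2) by (simp_all add: H.m_assoc[symmetric])
  show ?thesis using assms(2) c1 c2 unfolding assms(3,4)
    by (simp add: H.m_assoc H.inv_mult_group)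
qed

lemma alg2:
  assumes "group H" "carrier H = UNIV"
    and "c = a \<otimes>\<^bsub>H\<^esub> t \<otimes>\<^bsub>H\<^esub> inv\<^bsub>H\<^esub> b"
  shows "u \<otimes>\<^bsub>H\<^esub> t \<otimes>\<^bsub>H\<^esub> inv\<^bsub>H\<^esub> u = inv\<^bsub>H\<^esub> (a \<otimes>\<^bsub>H\<^esub> inv\<^bsub>H\<^esub> u) \<otimes>\<^bsub>H\<^esub> c \<otimes>\<^bsub>H\<^esub> (b \<otimes>\<^bsub>H\<^esub> inv\<^bsub>H\<^esub> u)"
proof -
  interpret H: group H by fact
  have c1: "\<And>x y. inv\<^bsub>H\<^esub> x \<otimes>\<^bsub>H\<^esub> (x \<otimes>\<^bsub>H\<^esub> y) = y"
   and c2: "\<And>x y. x \<otimes>\<^bsub>H\<^esub> (inv\<^bsub>H\<^esub> x \<otimes>\<^bsub>H\<^esub> y) = y"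
    using assms(2) by (simp_all add: H.m_assoc[symmetric])
  show ?thesis using assms(2) c1 c2 unfolding assms(3)
    by (simp add: H.m_assoc H.inv_mult_group)
qed

theorem lemma4p8:
  fixes G :: "('g, 'b) monoid_scheme"
    and M :: "'x::polish_space measure"
    and H :: "('h::polish_space, 'c) monoid_scheme"
    and act :: "'g \<Rightarrow> 'x \<Rightarrow> 'x"
    and \<gamma> :: "'g \<Rightarrow> 'x \<Rightarrow> 'h"
    and v :: "'x \<Rightarrow> 'h"
    and \<theta> :: "'g \<Rightarrow> 'h"
    and K :: "'h set"
    and v0 :: 'h
  assumes "group G" and "countable (carrier G)"
    and "sets M = sets borel" and "prob_space M"
    and "weakly_mixing_action G M act"
    and "group H" and "carrier H = UNIV" and "bi_invariant_metric H"
    and "subgroup K H" and "closed K"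
    and "is_cocycle G H K M act \<gamma>"
    and "v \<in> borel_measurable M"
    and "\<theta> \<in> hom G H"
    and "\<forall>g\<in>carrier G. AE x in M. \<gamma> g x = v (act g x) \<otimes>\<^bsub>H\<^esub> \<theta> g \<otimes>\<^bsub>H\<^esub> inv\<^bsub>H\<^esub> (v x)"
    and "essential_value M v v0"
  shows "(AE x in M. v x \<otimes>\<^bsub>H\<^esub> inv\<^bsub>H\<^esub> v0 \<in> K) \<and>
         (\<forall>g\<in>carrier G. v0 \<otimes>\<^bsub>H\<^esub> \<theta> g \<otimes>\<^bsub>H\<^esub> inv\<^bsub>H\<^esub> v0 \<in> K)"
proof -
  interpret H: group H by fact
  interpret P: prob_space M by fact
  interpret PP: pair_prob_space M M by unfold_locales
  have hG: "group G" by fact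
  have mp: "mp_action G M act"
    and erg: "ergodic_action G (M \<Otimes>\<^sub>M M) (\<lambda>g z. (act g (fst z), act g (snd z)))"
    using assms(5) unfolding weakly_mixing_action_def by auto
  have act1: "\<And>x. x \<in> space M \<Longrightarrow> act \<one>\<^bsub>G\<^esub> x = x"
   and actm: "\<And>g h x. g \<in> carrier G \<Longrightarrow> h \<in> carrier G \<Longrightarrow> x \<in> space M \<Longrightarrow> act (g \<otimes>\<^bsub>G\<^esub> h) x = act g (act h x)"
   and actmeas: "\<And>g. g \<in> carrier G \<Longrightarrow> act g \<in> M \<rightarrow>\<^sub>M M"
   and actdistr: "\<And>g. g \<in> carrier G \<Longrightarrow> distr M M (act g) = M"
    using mp unfolding mp_action_def by auto
  have bi: "\<And>a x y. dist (a \<otimes>\<^bsub>H\<^esub> x) (a \<otimes>\<^bsub>H\<^esub> y) = dist x y"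
          "\<And>a x y. dist (x \<otimes>\<^bsub>H\<^esub> a) (y \<otimes>\<^bsub>H\<^esub> a) = dist x y"
    using assms(8) unfolding bi_invariant_metric_def by auto
  have cocK: "\<And>g x. g \<in> carrier G \<Longrightarrow> x \<in> space M \<Longrightarrow> \<gamma> g x \<in> K"
    using assms(11) unfolding is_cocycle_def by auto
  have Ksub: "subgroup K H" by fact
  have K1: "\<one>\<^bsub>H\<^esub> \<in> K" and Km: "\<And>a b. a \<in> K \<Longrightarrow> b \<in> K \<Longrightarrow> a \<otimes>\<^bsub>H\<^esub> b \<in> K"
    and Ki: "\<And>a. a \<in> K \<Longrightarrow> inv\<^bsub>H\<^esub> a \<in> K"
    using Ksub by (auto simp: subgroup.one_closed subgroup.m_closed subgroup.m_inv_closed)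
  have vmeas: "v \<in> borel_measurable M" by fact
  define C where "C e = v -` ball v0 e \<inter> space M" for e
  have Cs: "C e \<in> sets M" for e
    unfolding C_def by (rule measurable_sets[OF vmeas]) simp
  have Cpos: "emeasure M (C e) > 0" if "e > 0" for e
  proof -
    have "open (ball v0 e) \<and> v0 \<in> ball v0 e" using that by simp
    then show ?thesis using assms(15) unfolding essential_value_def C_def by blast
  qed
  have Cd: "dist v0 (v x) < e" "x \<in> space M" if "x \<in> C e" for x e
    using that unfolding C_def by auto
  have ex_in: "\<exists>y\<in>D. Q y" if "AE y in M. Q y" "D \<in> sets M" "emeasure M D > 0" for Q D
  proof (rule ccontr)
    assume "\<not> ?thesis"
    then have "\<And>y. Q y \<Longrightarrow> y \<notin> D" by blast
    then have ae: "AE y in M. y \<notin> D" using that(1) by (rule eventually_mono[rotated])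
    have eq: "{y \<in> space M. \<not> (y \<notin> D)} = D" using sets.sets_into_space[OF that(2)] by auto
    have "emeasure M D = 0" using AE_iff_measurable[OF that(2) eq] ae by simp
    then show False using that(3) by simp
  qed
  have distr_snd: "distr (M \<Otimes>\<^sub>M M) M snd = M"
  proof (intro measure_eqI)
    fix A assume A: "A \<in> sets (distr (M \<Otimes>\<^sub>M M) M snd)"
    from A have "emeasure (distr (M \<Otimes>\<^sub>M M) M snd) A = emeasure (M \<Otimes>\<^sub>M M) (space M \<times> A)"
      by (auto simp add: emeasure_distr space_pair_measure dest: sets.sets_into_space intro!: arg_cong2[where f=emeasure])
    with A show "emeasure (distr (M \<Otimes>\<^sub>M M) M snd) A = emeasure M A"
      by (simp add: P.emeasure_pair_measure_Times P.emeasure_space_1)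
  qed simp
  have AE_fst: "AE z in M \<Otimes>\<^sub>M M. Q (fst z)" if "AE x in M. Q x" for Q
    by (rule AE_distrD[OF measurable_fst]) (simp only: P.distr_pair_fst[of M] that)
  have AE_snd: "AE z in M \<Otimes>\<^sub>M M. Q (snd z)" if "AE x in M. Q x" for Q
    by (rule AE_distrD[OF measurable_snd]) (simp only: distr_snd that)
  define \<Phi> where "\<Phi> z = v (fst z) \<otimes>\<^bsub>H\<^esub> inv\<^bsub>H\<^esub> (v (snd z))" for z
  have \<Phi>meas: "\<Phi> \<in> borel_measurable (M \<Otimes>\<^sub>M M)"
    unfolding \<Phi>_def
    by (rule borel_measurable_continuous_Pair[where H="\<lambda>a b. a \<otimes>\<^bsub>H\<^esub> inv\<^bsub>H\<^esub> b",
          OF measurable_compose[OF measurable_fst vmeas] measurable_compose[OF measurable_snd vmeas]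
             biinv_cont[OF assms(6,7,8)]])
  define Kr where "Kr r = {a. \<exists>k\<in>K. dist k a < r}" for r
  have Kr_open: "open (Kr r)" for r
  proof -
    have "Kr r = (\<Union>k\<in>K. ball k r)" unfolding Kr_def by auto
    then show ?thesis using open_UN[of K "\<lambda>k. ball k r"] by simp
  qed
  have Kr_inv: "k \<otimes>\<^bsub>H\<^esub> c \<otimes>\<^bsub>H\<^esub> k' \<in> Kr r" if "c \<in> Kr r" "k \<in> K" "k' \<in> K" for c k k' r
  proof -
    from that(1) obtain k0 where "k0 \<in> K" "dist k0 c < r" unfolding Kr_def by auto
    moreover have "dist (k \<otimes>\<^bsub>H\<^esub> k0 \<otimes>\<^bsub>H\<^esub> k') (k \<otimes>\<^bsub>H\<^esub> c \<otimes>\<^bsub>H\<^esub> k') = dist k0 c"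
      by (simp only: bi)
    moreover have "k \<otimes>\<^bsub>H\<^esub> k0 \<otimes>\<^bsub>H\<^esub> k' \<in> K" using Km that(2,3) \<open>k0 \<in> K\<close> by blast
    ultimately show ?thesis unfolding Kr_def using \<open>dist k0 c < r\<close>
      by (intro CollectI bexI[of _ "k \<otimes>\<^bsub>H\<^esub> k0 \<otimes>\<^bsub>H\<^esub> k'"]) simp_all
  qed
  have key: "AE z in M \<Otimes>\<^sub>M M. \<Phi> z \<in> Kr r" if "r > 0" for r
  proof -
    interpret GG: group G by fact
    define T where "T g z = (act g (fst z), act g (snd z))" for g z
    have spN: "space (M \<Otimes>\<^sub>M M) = space M \<times> space M" by (simp add: space_pair_measure)
    define B where "B = {z \<in> space (M \<Otimes>\<^sub>M M). \<Phi> z \<notin> Kr r}"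
    have B: "B \<in> sets (M \<Otimes>\<^sub>M M)"
    proof -
      have "B = space (M \<Otimes>\<^sub>M M) - (\<Phi> -` Kr r \<inter> space (M \<Otimes>\<^sub>M M))" unfolding B_def by auto
      moreover have "\<Phi> -` Kr r \<inter> space (M \<Otimes>\<^sub>M M) \<in> sets (M \<Otimes>\<^sub>M M)"
        by (rule measurable_sets[OF \<Phi>meas]) (simp add: Kr_open)
      ultimately show ?thesis by auto
    qed
    have Tmeas: "T g \<in> (M \<Otimes>\<^sub>M M) \<rightarrow>\<^sub>M (M \<Otimes>\<^sub>M M)" if "g \<in> carrier G" for g
      unfolding T_def
      by (intro measurable_Pair measurable_compose[OF measurable_fst actmeas[OF that]]
                measurable_compose[OF measurable_snd actmeas[OF that]])
    have Tsp: "T g z \<in> space (M \<Otimes>\<^sub>M M)" if "g \<in> carrier G" "z \<in> space (M \<Otimes>\<^sub>M M)" for g z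
      using measurable_space[OF Tmeas[OF that(1)] that(2)] .
    have TT: "T g (T h z) = T (g \<otimes>\<^bsub>G\<^esub> h) z"
      if "g \<in> carrier G" "h \<in> carrier G" "z \<in> space (M \<Otimes>\<^sub>M M)" for g h z
    proof -
      obtain a b where z: "z = (a, b)" by (cases z)
      with that(3) spN have "a \<in> space M" "b \<in> space M" by auto
      then show ?thesis unfolding T_def z using actm that(1,2) by simp
    qed
    have T1: "T \<one>\<^bsub>G\<^esub> z = z" if "z \<in> space (M \<Otimes>\<^sub>M M)" for z
    proof -
      obtain a b where z: "z = (a, b)" by (cases z)
      with that spN have "a \<in> space M" "b \<in> space M" by auto
      then show ?thesis unfolding T_def z using act1 by simp
    qed
    have Bstep: "AE z in M \<Otimes>\<^sub>M M. z \<in> B \<longrightarrow> T g z \<in> B" if g: "g \<in> carrier G" for g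
    proof -
      have Q: "AE x in M. \<gamma> g x = v (act g x) \<otimes>\<^bsub>H\<^esub> \<theta> g \<otimes>\<^bsub>H\<^esub> inv\<^bsub>H\<^esub> (v x)"
        using assms(14) g by blast
      from AE_fst[OF Q] AE_snd[OF Q] AE_space show ?thesis
      proof eventually_elim
        case (elim z)
        obtain a b where z: "z = (a, b)" by (cases z)
        with elim(3) spN have a: "a \<in> space M" "b \<in> space M" by auto
        show "z \<in> B \<longrightarrow> T g z \<in> B"
        proof (intro impI)
          assume zB: "z \<in> B"
          show "T g z \<in> B"
          proof (rule ccontr)
            assume "T g z \<notin> B"
            then have "\<Phi> (T g z) \<in> Kr r" using Tsp[OF g elim(3)] unfolding B_def by auto
            then have "inv\<^bsub>H\<^esub> (\<gamma> g a) \<otimes>\<^bsub>H\<^esub> \<Phi> (T g z) \<otimes>\<^bsub>H\<^esub> \<gamma> g b \<in> Kr r"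
              by (intro Kr_inv Ki cocK g a)
            moreover have "\<Phi> z = inv\<^bsub>H\<^esub> (\<gamma> g a) \<otimes>\<^bsub>H\<^esub> \<Phi> (T g z) \<otimes>\<^bsub>H\<^esub> \<gamma> g b"
              unfolding \<Phi>_def T_def z fst_conv snd_conv
              by (rule alg1[OF assms(6,7) elim(1)[unfolded z fst_conv] elim(2)[unfolded z snd_conv]])
            ultimately show False using zB unfolding B_def by auto
          qed
        qed
      qed
    qed
    define A where "A = {z \<in> space (M \<Otimes>\<^sub>M M). \<forall>g\<in>carrier G. T g z \<in> B}"
    have A_eq: "A = (\<Inter>g\<in>carrier G. T g -` B \<inter> space (M \<Otimes>\<^sub>M M))"
      unfolding A_def using GG.one_closed by auto
    have A_sets: "A \<in> sets (M \<Otimes>\<^sub>M M)"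
      unfolding A_eq using assms(2) GG.one_closed
      by (intro sets.countable_INT') (auto intro!: measurable_sets[OF Tmeas B])
    have A_inv: "\<forall>h\<in>carrier G. T h -` A \<inter> space (M \<Otimes>\<^sub>M M) = A"
    proof (intro ballI equalityI subsetI)
      fix h z assume h: "h \<in> carrier G" and z: "z \<in> T h -` A \<inter> space (M \<Otimes>\<^sub>M M)"
      then have zs: "z \<in> space (M \<Otimes>\<^sub>M M)" and all: "\<forall>g\<in>carrier G. T g (T h z) \<in> B"
        unfolding A_def by auto
      show "z \<in> A" unfolding A_def
      proof (intro CollectI conjI ballI zs)
        fix g assume g: "g \<in> carrier G"
        have "T (g \<otimes>\<^bsub>G\<^esub> inv\<^bsub>G\<^esub> h) (T h z) \<in> B" using all g h by auto
        moreover have "T (g \<otimes>\<^bsub>G\<^esub> inv\<^bsub>G\<^esub> h) (T h z) = T g z"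
          using TT[of "g \<otimes>\<^bsub>G\<^esub> inv\<^bsub>G\<^esub> h" h z] g h zs by (simp add: GG.m_assoc)
        ultimately show "T g z \<in> B" by simp
      qed
    next
      fix h z assume h: "h \<in> carrier G" and z: "z \<in> A"
      then have zs: "z \<in> space (M \<Otimes>\<^sub>M M)" and all: "\<forall>g\<in>carrier G. T g z \<in> B"
        unfolding A_def by auto
      have "\<forall>g\<in>carrier G. T g (T h z) \<in> B"
      proof
        fix g assume g: "g \<in> carrier G"
        have "T g (T h z) = T (g \<otimes>\<^bsub>G\<^esub> h) z" by (rule TT[OF g h zs])
        then show "T g (T h z) \<in> B" using all GG.m_closed[OF g h] by simp
      qed
      then show "z \<in> T h -` A \<inter> space (M \<Otimes>\<^sub>M M)" unfolding A_def using Tsp[OF h zs] zs by simp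
    qed
    have "emeasure (M \<Otimes>\<^sub>M M) A = 0 \<or> emeasure (M \<Otimes>\<^sub>M M) A = emeasure (M \<Otimes>\<^sub>M M) (space (M \<Otimes>\<^sub>M M))"
    proof -
      have A_inv': "\<forall>g\<in>carrier G. (\<lambda>z. (act g (fst z), act g (snd z))) -` A \<inter> space (M \<Otimes>\<^sub>M M) = A"
        using A_inv unfolding T_def .
      show ?thesis using HOL.mp[OF bspec[OF erg[unfolded ergodic_action_def] A_sets] A_inv'] .
    qed
    moreover have "emeasure (M \<Otimes>\<^sub>M M) A \<noteq> emeasure (M \<Otimes>\<^sub>M M) (space (M \<Otimes>\<^sub>M M))"
    proof
      assume full: "emeasure (M \<Otimes>\<^sub>M M) A = emeasure (M \<Otimes>\<^sub>M M) (space (M \<Otimes>\<^sub>M M))"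
      have AB: "A \<subseteq> B" unfolding A_def using T1 GG.one_closed by force
      have CC: "C (r/2) \<times> C (r/2) \<subseteq> space (M \<Otimes>\<^sub>M M) - A"
      proof
        fix z assume "z \<in> C (r/2) \<times> C (r/2)"
        then obtain x y where z: "z = (x,y)" "x \<in> C (r/2)" "y \<in> C (r/2)" by auto
        have "dist \<one>\<^bsub>H\<^esub> (\<Phi> z) = dist (\<one>\<^bsub>H\<^esub> \<otimes>\<^bsub>H\<^esub> v y) (\<Phi> z \<otimes>\<^bsub>H\<^esub> v y)"
          by (simp only: bi(2))
        also have "\<dots> = dist (v y) (v x)"
          unfolding \<Phi>_def z using assms(7) by (simp add: H.m_assoc)
        also have "\<dots> \<le> dist (v y) v0 + dist v0 (v x)" by (rule dist_triangle)
        also have "\<dots> < r/2 + r/2" using Cd(1)[OF z(2)] Cd(1)[OF z(3)]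
          by (simp add: dist_commute add_strict_mono)
        finally have "\<Phi> z \<in> Kr r" unfolding Kr_def using K1 by auto
        then have "z \<notin> B" unfolding B_def by auto
        then show "z \<in> space (M \<Otimes>\<^sub>M M) - A" using AB z Cd(2) spN by auto
      qed
      have "emeasure (M \<Otimes>\<^sub>M M) (space (M \<Otimes>\<^sub>M M) - A) = 0"
        using full by (simp add: emeasure_compl[OF A_sets] PP.emeasure_finite)
      then have "emeasure (M \<Otimes>\<^sub>M M) (C (r/2) \<times> C (r/2)) = 0"
        using emeasure_mono[OF CC] A_sets by (metis le_zero_eq sets.compl_sets)
      moreover have "emeasure (M \<Otimes>\<^sub>M M) (C (r/2) \<times> C (r/2)) = emeasure M (C (r/2)) * emeasure M (C (r/2))"
        by (rule P.emeasure_pair_measure_Times[OF Cs Cs])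
      moreover have "emeasure M (C (r/2)) \<noteq> 0" using Cpos[of "r/2"] \<open>r > 0\<close> by simp
      ultimately show False by simp
    qed
    ultimately have A0: "emeasure (M \<Otimes>\<^sub>M M) A = 0" by blast
    have AE1: "AE z in M \<Otimes>\<^sub>M M. z \<notin> A" by (rule AE_not_in) (simp add: null_setsI A_sets A0)
    have AE2: "AE z in M \<Otimes>\<^sub>M M. \<forall>g\<in>carrier G. z \<in> B \<longrightarrow> T g z \<in> B"
      by (subst AE_ball_countable[OF assms(2)]) (intro ballI Bstep)
    from AE1 AE2 AE_space show ?thesis
    proof eventually_elim
      case (elim z)
      show "\<Phi> z \<in> Kr r"
      proof (rule ccontr)
        assume "\<Phi> z \<notin> Kr r"
        then have "z \<in> B" using elim(3) unfolding B_def by auto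
        then have "z \<in> A" using elim(2,3) unfolding A_def by blast
        then show False using elim(1) by simp
      qed
    qed
  qed
  have K_AE: "AE z in M \<Otimes>\<^sub>M M. \<Phi> z \<in> K"
  proof -
    have "\<forall>n::nat. AE z in M \<Otimes>\<^sub>M M. \<Phi> z \<in> Kr (1 / real (Suc n))"
      by (intro allI key) simp
    then have "AE z in M \<Otimes>\<^sub>M M. \<forall>n::nat. \<Phi> z \<in> Kr (1 / real (Suc n))"
      by (subst AE_all_countable)
    then show ?thesis
    proof (rule eventually_mono)
      fix z assume n: "\<forall>n::nat. \<Phi> z \<in> Kr (1 / real (Suc n))"
      have "\<Phi> z \<in> closure K"
        unfolding closure_approachable
      proof (intro allI impI)
        fix e :: real assume "e > 0"
        then obtain m where m: "inverse (real (Suc m)) < e" using reals_Archimedean by blast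
        from n have "\<Phi> z \<in> Kr (1 / real (Suc m))" by blast
        then obtain k where k: "k \<in> K" "dist k (\<Phi> z) < 1 / real (Suc m)" unfolding Kr_def by blast
        have "dist k (\<Phi> z) < e" using k(2) m by (simp add: inverse_eq_divide)
        then show "\<exists>y\<in>K. dist y (\<Phi> z) < e" using k(1) by blast
      qed
      then show "\<Phi> z \<in> K" using assms(10) by simp
    qed
  qed
  have part1: "AE x in M. v x \<otimes>\<^bsub>H\<^esub> inv\<^bsub>H\<^esub> v0 \<in> K"
  proof -
    have ae2: "AE x in M. AE y in M. \<Phi> (x, y) \<in> K" by (rule PP.AE_pair[OF K_AE])
    have "AE x in M. \<forall>n::nat. \<exists>y \<in> C (1 / real (Suc n)). \<Phi> (x, y) \<in> K"
    proof (rule eventually_mono[OF ae2], intro allI)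
      fix x n assume "AE y in M. \<Phi> (x, y) \<in> K"
      then show "\<exists>y \<in> C (1 / real (Suc n)). \<Phi> (x, y) \<in> K"
        by (rule ex_in[OF _ Cs Cpos]) simp
    qed
    then show ?thesis
    proof (rule eventually_mono)
      fix x assume n: "\<forall>n::nat. \<exists>y \<in> C (1 / real (Suc n)). \<Phi> (x, y) \<in> K"
      have "v x \<otimes>\<^bsub>H\<^esub> inv\<^bsub>H\<^esub> v0 \<in> closure K"
        unfolding closure_approachable
      proof (intro allI impI)
        fix e :: real assume "e > 0"
        then obtain m where m: "inverse (real (Suc m)) < e" using reals_Archimedean by blast
        from n obtain y where y: "y \<in> C (1 / real (Suc m))" "\<Phi> (x, y) \<in> K" by blast
        have "dist (\<Phi> (x, y)) (v x \<otimes>\<^bsub>H\<^esub> inv\<^bsub>H\<^esub> v0) = dist (inv\<^bsub>H\<^esub> (v y)) (inv\<^bsub>H\<^esub> v0)"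
          unfolding \<Phi>_def fst_conv snd_conv by (simp only: bi(1))
        also have "\<dots> = dist (v y) v0" by (rule biinv_inv_dist[OF assms(6,7,8)])
        also have "\<dots> < 1 / real (Suc m)" using Cd(1)[OF y(1)] by (simp add: dist_commute)
        finally have "dist (\<Phi> (x, y)) (v x \<otimes>\<^bsub>H\<^esub> inv\<^bsub>H\<^esub> v0) < e" using m by (simp add: inverse_eq_divide)
        then show "\<exists>k\<in>K. dist k (v x \<otimes>\<^bsub>H\<^esub> inv\<^bsub>H\<^esub> v0) < e" using y(2) by blast
      qed
      then show "v x \<otimes>\<^bsub>H\<^esub> inv\<^bsub>H\<^esub> v0 \<in> K" using assms(10) by simp
    qed
  qed
  have part2: "v0 \<otimes>\<^bsub>H\<^esub> \<theta> g \<otimes>\<^bsub>H\<^esub> inv\<^bsub>H\<^esub> v0 \<in> K" if g: "g \<in> carrier G" for g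
  proof -
    have Q: "AE x in M. \<gamma> g x = v (act g x) \<otimes>\<^bsub>H\<^esub> \<theta> g \<otimes>\<^bsub>H\<^esub> inv\<^bsub>H\<^esub> (v x)"
      using assms(14) g by blast
    have "AE x in distr M M (act g). v x \<otimes>\<^bsub>H\<^esub> inv\<^bsub>H\<^esub> v0 \<in> K"
      by (simp only: actdistr[OF g] part1)
    then have p1g: "AE x in M. v (act g x) \<otimes>\<^bsub>H\<^esub> inv\<^bsub>H\<^esub> v0 \<in> K"
      by (rule AE_distrD[OF actmeas[OF g]])
    have all: "AE x in M. x \<in> space M \<and> \<gamma> g x = v (act g x) \<otimes>\<^bsub>H\<^esub> \<theta> g \<otimes>\<^bsub>H\<^esub> inv\<^bsub>H\<^esub> (v x)
        \<and> v x \<otimes>\<^bsub>H\<^esub> inv\<^bsub>H\<^esub> v0 \<in> K \<and> v (act g x) \<otimes>\<^bsub>H\<^esub> inv\<^bsub>H\<^esub> v0 \<in> K"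
      using AE_space Q part1 p1g by eventually_elim blast
    have "\<exists>x. x \<in> space M \<and> \<gamma> g x = v (act g x) \<otimes>\<^bsub>H\<^esub> \<theta> g \<otimes>\<^bsub>H\<^esub> inv\<^bsub>H\<^esub> (v x)
        \<and> v x \<otimes>\<^bsub>H\<^esub> inv\<^bsub>H\<^esub> v0 \<in> K \<and> v (act g x) \<otimes>\<^bsub>H\<^esub> inv\<^bsub>H\<^esub> v0 \<in> K"
    proof (rule ccontr)
      assume nex: "\<not> ?thesis"
      have "AE x in M. False"
        by (rule eventually_mono[OF all]) (use nex in blast)
      then show False by (simp add: P.AE_False)
    qed
    then obtain x where x: "x \<in> space M" "\<gamma> g x = v (act g x) \<otimes>\<^bsub>H\<^esub> \<theta> g \<otimes>\<^bsub>H\<^esub> inv\<^bsub>H\<^esub> (v x)"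
        "v x \<otimes>\<^bsub>H\<^esub> inv\<^bsub>H\<^esub> v0 \<in> K" "v (act g x) \<otimes>\<^bsub>H\<^esub> inv\<^bsub>H\<^esub> v0 \<in> K" by blast
    have eq: "v0 \<otimes>\<^bsub>H\<^esub> \<theta> g \<otimes>\<^bsub>H\<^esub> inv\<^bsub>H\<^esub> v0 =
        inv\<^bsub>H\<^esub> (v (act g x) \<otimes>\<^bsub>H\<^esub> inv\<^bsub>H\<^esub> v0) \<otimes>\<^bsub>H\<^esub> \<gamma> g x \<otimes>\<^bsub>H\<^esub> (v x \<otimes>\<^bsub>H\<^esub> inv\<^bsub>H\<^esub> v0)"
      by (rule alg2[OF assms(6,7) x(2)])
    show ?thesis unfolding eq by (intro Km Ki x(3) x(4) cocK[OF g x(1)])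
  qed
  show ?thesis using part1 part2 by blast
qed

end
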